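(* Let $U=\big|\log\big(p_{\hat Y\mid A}(\hat Y\mid A)/p_{\hat Y}(\hat Y)\big)\big|$. For every $\delta\in(0,1]$, $\Pr(U>\epsilon_1)\le\delta$ where $$\epsilon_1=\frac{s^*}{\sqrt\delta}+\sup_{y\in\mathcal Y}\max\Big\{\gamma+\sum_{k=1}^d\log\Big(\frac{p_{\hat Y}(y)}{\inf_{a_k\in\mathcal A_k}p_{\hat Y\mid A_k}(y\mid a_k)}\Big),\ -\gamma+\sum_{k=1}^d\log\Big(\frac{\sup_{a_k\in\mathcal A_k}p_{\hat Y\mid A_k}(y\mid a_k)}{p_{\hat Y}(y)}\Big)\Big\},$$ with $s^*=(\sigma^{2/3}+\sigma_y^{2/3})^{3/2}$ and $\gamma=C(A)-C(A\mid\hat Y)$.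
   Context: Let $\hat Y$ take values in a finite set $\mathcal Y$ and let $A=(A_1,\dots,A_d)$ be a random vector, $A_k$ taking values in a finite set $\mathcal A_k$, $\mathcal A=\mathcal A_1\times\dots\times\mathcal A_d$; $(A,\hat Y)$ has joint law $p_{A,\hat Y}$. Write $p_V(v)=\Pr(V=v)$ and $p_{V\mid W}(v\mid w)=\Pr(V=v\mid W=w)$. Assume $p_{A,\hat Y}(a,y)>0$ for all $(a,y)\in\mathcal A\times\mathcal Y$. Define $L=\log\big(p_A(A)/\prod_{k} p_{A_k}(A_k)\big)$, $L_y=\log\big(p_{A\mid\hat Y}(A\mid\hat Y)/\prod_{k} p_{A_k\mid\hat Y}(A_k\mid\hat Y)\big)$, $C(A)=\mathbb E[L]$, $C(A\mid\hat Y)=\mathbb E[L_y]$, and $\sigma,\sigma_y$ the standard deviations of $L,L_y$. *)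

theory Defs
  imports "HOL-Probability.Probability"
begin

text \<open>The joint law of (A, Yhat) is a pmf P on pairs (a, y), where a :: nat => 'a
  is the vector (A_1,...,A_d) (components indexed by k < d) and y :: 'y.\<close>

definition pA :: "((nat \<Rightarrow> 'a) \<times> 'y) pmf \<Rightarrow> (nat \<Rightarrow> 'a) \<Rightarrow> real" where
  "pA P a = measure_pmf.prob P {z. fst z = a}"

definition pY :: "((nat \<Rightarrow> 'a) \<times> 'y) pmf \<Rightarrow> 'y \<Rightarrow> real" where
  "pY P y = measure_pmf.prob P {z. snd z = y}"

definition pAk :: "((nat \<Rightarrow> 'a) \<times> 'y) pmf \<Rightarrow> nat \<Rightarrow> 'a \<Rightarrow> real" where
  "pAk P k x = measure_pmf.prob P {z. fst z k = x}"

definition pAY :: "((nat \<Rightarrow> 'a) \<times> 'y) pmf \<Rightarrow> (nat \<Rightarrow> 'a) \<Rightarrow> 'y \<Rightarrow> real" where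
  "pAY P a y = measure_pmf.prob P {z. fst z = a \<and> snd z = y}"

definition pAkY :: "((nat \<Rightarrow> 'a) \<times> 'y) pmf \<Rightarrow> nat \<Rightarrow> 'a \<Rightarrow> 'y \<Rightarrow> real" where
  "pAkY P k x y = measure_pmf.prob P {z. fst z k = x \<and> snd z = y}"

definition pA_given_Y :: "((nat \<Rightarrow> 'a) \<times> 'y) pmf \<Rightarrow> (nat \<Rightarrow> 'a) \<Rightarrow> 'y \<Rightarrow> real" where
  "pA_given_Y P a y = pAY P a y / pY P y"

definition pAk_given_Y :: "((nat \<Rightarrow> 'a) \<times> 'y) pmf \<Rightarrow> nat \<Rightarrow> 'a \<Rightarrow> 'y \<Rightarrow> real" where
  "pAk_given_Y P k x y = pAkY P k x y / pY P y"

definition pY_given_A :: "((nat \<Rightarrow> 'a) \<times> 'y) pmf \<Rightarrow> 'y \<Rightarrow> (nat \<Rightarrow> 'a) \<Rightarrow> real" where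
  "pY_given_A P y a = pAY P a y / pA P a"

definition pY_given_Ak :: "((nat \<Rightarrow> 'a) \<times> 'y) pmf \<Rightarrow> 'y \<Rightarrow> nat \<Rightarrow> 'a \<Rightarrow> real" where
  "pY_given_Ak P y k x = pAkY P k x y / pAk P k x"

definition Lrv :: "nat \<Rightarrow> ((nat \<Rightarrow> 'a) \<times> 'y) pmf \<Rightarrow> (nat \<Rightarrow> 'a) \<times> 'y \<Rightarrow> real" where
  "Lrv d P z = ln (pA P (fst z) / (\<Prod>k<d. pAk P k (fst z k)))"

definition Lyrv :: "nat \<Rightarrow> ((nat \<Rightarrow> 'a) \<times> 'y) pmf \<Rightarrow> (nat \<Rightarrow> 'a) \<times> 'y \<Rightarrow> real" where
  "Lyrv d P z = ln (pA_given_Y P (fst z) (snd z) / (\<Prod>k<d. pAk_given_Y P k (fst z k) (snd z)))"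

definition TC :: "nat \<Rightarrow> ((nat \<Rightarrow> 'a) \<times> 'y) pmf \<Rightarrow> real" where
  "TC d P = measure_pmf.expectation P (Lrv d P)"

definition TCcond :: "nat \<Rightarrow> ((nat \<Rightarrow> 'a) \<times> 'y) pmf \<Rightarrow> real" where
  "TCcond d P = measure_pmf.expectation P (Lyrv d P)"

definition sigmaL :: "nat \<Rightarrow> ((nat \<Rightarrow> 'a) \<times> 'y) pmf \<Rightarrow> real" where
  "sigmaL d P = sqrt (measure_pmf.variance P (Lrv d P))"

definition sigmaLy :: "nat \<Rightarrow> ((nat \<Rightarrow> 'a) \<times> 'y) pmf \<Rightarrow> real" where
  "sigmaLy d P = sqrt (measure_pmf.variance P (Lyrv d P))"

definition Urv :: "((nat \<Rightarrow> 'a) \<times> 'y) pmf \<Rightarrow> (nat \<Rightarrow> 'a) \<times> 'y \<Rightarrow> real" where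
  "Urv P z = \<bar>ln (pY_given_A P (snd z) (fst z) / pY P (snd z))\<bar>"

definition epsilon1 ::
  "nat \<Rightarrow> (nat \<Rightarrow> 'a set) \<Rightarrow> ((nat \<Rightarrow> 'a) \<times> 'y::finite) pmf \<Rightarrow> real \<Rightarrow> real" where
  "epsilon1 d Ak P \<delta> =
     (let s = ((sigmaL d P) powr (2/3) + (sigmaLy d P) powr (2/3)) powr (3/2);
          \<gamma> = TC d P - TCcond d P
      in s / sqrt \<delta> +
         Max (range (\<lambda>y.
           max (\<gamma> + (\<Sum>k<d. ln (pY P y / Min ((\<lambda>x. pY_given_Ak P y k x) ` Ak k))))
               (- \<gamma> + (\<Sum>k<d. ln (Max ((\<lambda>x. pY_given_Ak P y k x) ` Ak k) / pY P y))))))"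

end

theory Submission
  imports Defs
begin

lemma pmf_le_prob: "z \<in> X \<Longrightarrow> pmf P z \<le> measure_pmf.prob P X"
  by (metis measure_pmf_single measure_pmf.finite_measure_mono empty_subsetI insert_subset sets_measure_pmf UNIV_I)

lemma ln_div_pos: "0 < x \<Longrightarrow> 0 < y \<Longrightarrow> ln (x / y) = ln x - ln (y::real)"
  by (simp add: ln_div)

lemma powr_sum_le:
  fixes a b :: real assumes "0 \<le> a" "0 \<le> b"
  shows "a + b \<le> (a powr (2/3) + b powr (2/3)) powr (3/2)"
proof -
  define u where "u = a powr (2/3)"
  define v where "v = b powr (2/3)"
  have u0: "0 \<le> u" "0 \<le> v" by (auto simp: u_def v_def)
  have a: "a = u powr (3/2)" using assms by (simp add: u_def powr_powr)
  have b: "b = v powr (3/2)" using assms by (simp add: v_def powr_powr)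
  have e: "x powr (3/2) = x * x powr (1/2)" if "0 \<le> x" for x :: real
  proof (cases "x = 0")
    case False
    then show ?thesis using powr_add[of x 1 "1/2"] that by simp
  qed simp
  have "u * u powr (1/2) \<le> u * (u+v) powr (1/2)"
    using u0 by (intro mult_left_mono powr_mono2) auto
  moreover have "v * v powr (1/2) \<le> v * (u+v) powr (1/2)"
    using u0 by (intro mult_left_mono powr_mono2) auto
  ultimately have "u powr (3/2) + v powr (3/2) \<le> (u+v) * (u+v) powr (1/2)"
    using u0 by (simp add: e distrib_right)
  also have "\<dots> = (u+v) powr (3/2)" using u0 by (simp add: e)
  finally have "a + b \<le> (u+v) powr (3/2)" using a b by simp
  then show ?thesis by (simp add: u_def v_def)
qed


lemma main_pointwise:
  fixes d :: nat and Ak :: "nat \<Rightarrow> 'a set"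
    and P :: "((nat \<Rightarrow> 'a) \<times> 'y::finite) pmf"
  assumes fin: "\<And>k. k < d \<Longrightarrow> finite (Ak k)"
    and sup: "set_pmf P = PiE {..<d} Ak \<times> UNIV"
    and z: "z \<in> set_pmf P"
  shows "Urv P z \<le> \<bar>(Lyrv d P z - TCcond d P) - (Lrv d P z - TC d P)\<bar> +
     max ((TC d P - TCcond d P) + (\<Sum>k<d. ln (pY P (snd z) / Min ((\<lambda>x. pY_given_Ak P (snd z) k x) ` Ak k))))
         (- (TC d P - TCcond d P) + (\<Sum>k<d. ln (Max ((\<lambda>x. pY_given_Ak P (snd z) k x) ` Ak k) / pY P (snd z))))"
proof -
  obtain a y where zz: "z = (a, y)" by (cases z)
  have aP: "a \<in> PiE {..<d} Ak" using z sup zz by auto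
  have pz: "0 < pmf P z" using z by (simp add: pmf_positive)
  have pAY: "0 < pAY P a y" unfolding pAY_def
    using pz pmf_le_prob[of z "{z. fst z = a \<and> snd z = y}" P] zz by simp
  have pA: "0 < pA P a" unfolding pA_def
    using pz pmf_le_prob[of z "{z. fst z = a}" P] zz by simp
  have pY: "0 < pY P y" unfolding pY_def
    using pz pmf_le_prob[of z "{z. snd z = y}" P] zz by simp
  have pos: "0 < pAk P k x \<and> 0 < pAkY P k x y" if k: "k < d" and x: "x \<in> Ak k" for k x
  proof -
    define a' where "a' = a(k := x)"
    have "a' \<in> PiE {..<d} Ak" using aP k x unfolding a'_def PiE_def Pi_def extensional_def by auto
    hence z': "(a', y) \<in> set_pmf P" using sup by auto
    hence p': "0 < pmf P (a', y)" by (simp add: pmf_positive)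
    have "fst (a', y) k = x" by (simp add: a'_def)
    show ?thesis unfolding pAk_def pAkY_def
      using p' pmf_le_prob[of "(a',y)" "{z. fst z k = x}" P] pmf_le_prob[of "(a',y)" "{z. fst z k = x \<and> snd z = y}" P]
        \<open>fst (a', y) k = x\<close> by simp
  qed
  have ak: "a k \<in> Ak k" if "k < d" for k using aP that by auto
  define f where "f k x = pY_given_Ak P y k x" for k x
  have fpos: "0 < f k x" if "k < d" "x \<in> Ak k" for k x
    using pos[OF that] unfolding f_def pY_given_Ak_def by simp
  have mn: "0 < Min (f k ` Ak k) \<and> Min (f k ` Ak k) \<le> f k (a k) \<and> f k (a k) \<le> Max (f k ` Ak k)"
    if k: "k < d" for k
  proof -
    have ne: "f k ` Ak k \<noteq> {}" using ak[OF k] by auto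
    have fi: "finite (f k ` Ak k)" using fin[OF k] by auto
    have "Min (f k ` Ak k) \<in> f k ` Ak k" using Min_in[OF fi ne] .
    then have "0 < Min (f k ` Ak k)" using fpos k by auto
    moreover have "Min (f k ` Ak k) \<le> f k (a k)" using fi ak[OF k] by auto
    moreover have "f k (a k) \<le> Max (f k ` Ak k)" using fi ak[OF k] by auto
    ultimately show ?thesis by blast
  qed
  define c where "c k = ln (pAkY P k (a k) y) - ln (pAk P k (a k)) - ln (pY P y)" for k
  have cf: "c k = ln (f k (a k)) - ln (pY P y)" if "k < d" for k
    using pos[OF that ak[OF that]] pY unfolding c_def f_def pY_given_Ak_def
    by (simp add: ln_div)
  have Lrv: "Lrv d P z = ln (pA P a) - (\<Sum>k<d. ln (pAk P k (a k)))"
  proof -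
    have pk: "\<And>k. k \<in> {..<d} \<Longrightarrow> 0 < pAk P k (a k)" using pos ak by auto
    have pp: "0 < (\<Prod>k<d. pAk P k (a k))" using pk by (intro prod_pos) auto
    have "ln (pA P a / (\<Prod>k<d. pAk P k (a k))) = ln (pA P a) - ln (\<Prod>k<d. pAk P k (a k))"
      using ln_div_pos[OF pA pp] .
    also have "ln (\<Prod>k<d. pAk P k (a k)) = (\<Sum>k<d. ln (pAk P k (a k)))"
      by (rule ln_prod) (simp, metis pk less_irrefl)
    finally show ?thesis unfolding Lrv_def zz by simp
  qed
  have Lyrv: "Lyrv d P z = (ln (pAY P a y) - ln (pY P y)) - (\<Sum>k<d. ln (pAkY P k (a k) y) - ln (pY P y))"
  proof -
    have pk: "\<And>k. k \<in> {..<d} \<Longrightarrow> 0 < pAkY P k (a k) y / pY P y" using pos ak pY by auto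
    have pp: "0 < (\<Prod>k<d. pAkY P k (a k) y / pY P y)" using pk by (intro prod_pos) auto
    have q: "0 < pAY P a y / pY P y" using pAY pY by simp
    have "ln (pAY P a y / pY P y / (\<Prod>k<d. pAkY P k (a k) y / pY P y)) = ln (pAY P a y / pY P y) - ln (\<Prod>k<d. pAkY P k (a k) y / pY P y)"
      using ln_div_pos[OF q pp] .
    also have "ln (\<Prod>k<d. pAkY P k (a k) y / pY P y) = (\<Sum>k<d. ln (pAkY P k (a k) y / pY P y))"
      by (rule ln_prod) (simp, metis pk less_irrefl)
    also have "\<dots> = (\<Sum>k<d. ln (pAkY P k (a k) y) - ln (pY P y))"
      by (intro sum.cong refl) (metis ln_div_pos pos ak pY lessThan_iff)
    finally show ?thesis unfolding Lyrv_def zz pA_given_Y_def pAk_given_Y_def using pAY pY by (simp add: ln_div)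
  qed
  have U: "Urv P z = \<bar>ln (pAY P a y) - ln (pA P a) - ln (pY P y)\<bar>"
    unfolding Urv_def zz pY_given_A_def using pAY pA pY by (simp add: ln_div ln_mult)
  have W: "ln (pAY P a y) - ln (pA P a) - ln (pY P y) = Lyrv d P z - Lrv d P z + (\<Sum>k<d. c k)"
    unfolding Lrv Lyrv c_def by (simp add: sum_subtractf)
  have c1: "(\<Sum>k<d. c k) \<le> (\<Sum>k<d. ln (Max (f k ` Ak k) / pY P y))"
  proof (rule sum_mono)
    fix k assume "k \<in> {..<d}" hence k: "k < d" by simp
    have "ln (f k (a k)) \<le> ln (Max (f k ` Ak k))" using mn[OF k] by simp
    then show "c k \<le> ln (Max (f k ` Ak k) / pY P y)" using cf[OF k] mn[OF k] pY
      by (simp add: ln_div)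
  qed
  have c2: "- (\<Sum>k<d. c k) \<le> (\<Sum>k<d. ln (pY P y / Min (f k ` Ak k)))"
    unfolding sum_negf[symmetric]
  proof (rule sum_mono)
    fix k assume "k \<in> {..<d}" hence k: "k < d" by simp
    have "ln (Min (f k ` Ak k)) \<le> ln (f k (a k))" using mn[OF k] by simp
    then show "- c k \<le> ln (pY P y / Min (f k ` Ak k))" using cf[OF k] mn[OF k] pY
      by (simp add: ln_div)
  qed
  show ?thesis unfolding U W using c1 c2 unfolding f_def zz snd_conv by linarith
qed


theorem mainTheorem4:
  fixes d :: nat and Ak :: "nat \<Rightarrow> 'a set"
    and P :: "((nat \<Rightarrow> 'a) \<times> 'y::finite) pmf" and \<delta> :: real
  assumes "\<And>k. k < d \<Longrightarrow> finite (Ak k)"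
    and "set_pmf P = PiE {..<d} Ak \<times> UNIV"
    and "0 < \<delta>" and "\<delta> \<le> 1"
  shows "measure_pmf.prob P {z. Urv P z > epsilon1 d Ak P \<delta>} \<le> \<delta>"
proof -
  note fin = assms(1) and sup = assms(2)
  define S where "S = set_pmf P"
  have finS: "finite S" unfolding S_def sup
    using fin by (intro finite_cartesian_product finite_PiE) auto
  define \<gamma> where "\<gamma> = TC d P - TCcond d P"
  define D where "D z = (Lyrv d P z - TCcond d P) - (Lrv d P z - TC d P)" for z
  define F where "F y = max (\<gamma> + (\<Sum>k<d. ln (pY P y / Min ((\<lambda>x. pY_given_Ak P y k x) ` Ak k))))
               (- \<gamma> + (\<Sum>k<d. ln (Max ((\<lambda>x. pY_given_Ak P y k x) ` Ak k) / pY P y)))" for y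
  define s where "s = ((sigmaL d P) powr (2/3) + (sigmaLy d P) powr (2/3)) powr (3/2)"
  have eps: "epsilon1 d Ak P \<delta> = s / sqrt \<delta> + Max (range F)"
    unfolding epsilon1_def Let_def s_def F_def \<gamma>_def ..
  have point: "Urv P z \<le> \<bar>D z\<bar> + Max (range F)" if "z \<in> S" for z
  proof -
    have "F (snd z) \<le> Max (range F)" by (rule Max_ge) auto
    then show ?thesis using main_pointwise[OF fin sup, of z] that
      unfolding S_def D_def F_def \<gamma>_def by linarith
  qed
  have E: "measure_pmf.expectation P g = (\<Sum>z\<in>S. pmf P z * g z)" for g :: "_ \<Rightarrow> real"
    using integral_measure_pmf_real[OF finS, of P g] unfolding S_def
    by (simp add: mult.commute)
  have p0: "0 \<le> pmf P z" for z by simp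
  define A where "A z = Lyrv d P z - TCcond d P" for z
  define B where "B z = Lrv d P z - TC d P" for z
  define \<alpha> where "\<alpha> = (\<Sum>z\<in>S. pmf P z * (A z)\<^sup>2)"
  define \<beta> where "\<beta> = (\<Sum>z\<in>S. pmf P z * (B z)\<^sup>2)"
  have sy: "sigmaLy d P = sqrt \<alpha>"
    unfolding sigmaLy_def \<alpha>_def A_def TCcond_def E ..
  have sx: "sigmaL d P = sqrt \<beta>"
    unfolding sigmaL_def \<beta>_def B_def TC_def E ..
  have a0: "0 \<le> \<alpha>" unfolding \<alpha>_def by (intro sum_nonneg) simp
  have b0: "0 \<le> \<beta>" unfolding \<beta>_def by (intro sum_nonneg) simp
  define m where "m = (\<Sum>z\<in>S. pmf P z * A z * B z)"
  have "m\<^sup>2 = (\<Sum>z\<in>S. (sqrt (pmf P z) * A z) * (sqrt (pmf P z) * B z))\<^sup>2"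
    unfolding m_def
    by (intro arg_cong[where f="\<lambda>x. x\<^sup>2"] sum.cong refl)
       (simp add: algebra_simps real_sqrt_mult_self)
  also have "\<dots> \<le> (\<Sum>z\<in>S. (sqrt (pmf P z) * A z)\<^sup>2) * (\<Sum>z\<in>S. (sqrt (pmf P z) * B z)\<^sup>2)"
    by (rule Cauchy_Schwarz_ineq_sum)
  also have "\<dots> = \<alpha> * \<beta>" unfolding \<alpha>_def \<beta>_def
    by (simp add: power_mult_distrib)
  finally have m2: "m\<^sup>2 \<le> \<alpha> * \<beta>" .
  have mabs: "- m \<le> sqrt \<alpha> * sqrt \<beta>"
    using real_le_rsqrt[of "-m" "\<alpha> * \<beta>"] m2 by (simp add: real_sqrt_mult)
  have "(\<Sum>z\<in>S. pmf P z * (D z)\<^sup>2) = \<alpha> + \<beta> - 2 * m"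
    unfolding \<alpha>_def \<beta>_def m_def D_def A_def[symmetric] B_def[symmetric]
    by (simp add: power2_diff algebra_simps sum.distrib sum_subtractf sum_distrib_left)
  also have "\<dots> \<le> (sqrt \<alpha> + sqrt \<beta>)\<^sup>2"
    using mabs a0 b0 by (simp add: power2_sum)
  also have "\<dots> \<le> s\<^sup>2"
  proof (rule power_mono)
    show "sqrt \<alpha> + sqrt \<beta> \<le> s" unfolding s_def sx sy
      using powr_sum_le[of "sqrt \<beta>" "sqrt \<alpha>"] a0 b0 by simp
  qed (use a0 b0 in simp)
  finally have ED: "(\<Sum>z\<in>S. pmf P z * (D z)\<^sup>2) \<le> s\<^sup>2" .
  have s0: "0 \<le> s" unfolding s_def by simp
  define \<tau> where "\<tau> = s / sqrt \<delta>"
  define T where "T = {z\<in>S. \<tau> < \<bar>D z\<bar>}"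
  have finT: "finite T" unfolding T_def using finS by simp
  have "measure_pmf.prob P {z. Urv P z > epsilon1 d Ak P \<delta>}
      = measure_pmf.prob P ({z. Urv P z > epsilon1 d Ak P \<delta>} \<inter> S)"
    unfolding S_def by (rule measure_Int_set_pmf[symmetric])
  also have "\<dots> \<le> measure_pmf.prob P T"
    by (rule measure_pmf.finite_measure_mono)
       (use point in \<open>fastforce simp: T_def eps \<tau>_def\<close>, simp)
  also have "\<dots> = (\<Sum>z\<in>T. pmf P z)" by (rule measure_measure_pmf_finite[OF finT])
  also have "\<dots> \<le> \<delta>"
  proof (cases "s = 0")
    case True
    have "(\<Sum>z\<in>S. pmf P z * (D z)\<^sup>2) = 0"
      using ED True by (intro antisym) (simp_all add: sum_nonneg)
    then have "\<forall>z\<in>S. pmf P z * (D z)\<^sup>2 = 0"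
      using finS by (subst sum_nonneg_eq_0_iff[symmetric]) auto
    then have "\<forall>z\<in>S. D z = 0" using pmf_positive unfolding S_def by fastforce
    then have "T = {}" unfolding T_def \<tau>_def True by auto
    then show ?thesis using assms(3) by simp
  next
    case False
    then have sp: "0 < s" using s0 by simp
    have tp: "0 < \<tau>" unfolding \<tau>_def using sp assms(3) by simp
    have t2: "\<tau>\<^sup>2 = s\<^sup>2 / \<delta>" unfolding \<tau>_def using assms(3) by (simp add: power_divide)
    have "(\<Sum>z\<in>T. pmf P z) \<le> (\<Sum>z\<in>T. pmf P z * (D z)\<^sup>2 / \<tau>\<^sup>2)"
    proof (rule sum_mono)
      fix z assume "z \<in> T"
      then have "\<tau> < \<bar>D z\<bar>" unfolding T_def by auto
      then have "\<tau>\<^sup>2 \<le> (D z)\<^sup>2" using tp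
        by (metis abs_ge_zero less_imp_le power2_abs power_mono)
      then have "1 \<le> (D z)\<^sup>2 / \<tau>\<^sup>2" using tp by simp
      then show "pmf P z \<le> pmf P z * (D z)\<^sup>2 / \<tau>\<^sup>2"
        using mult_left_mono[OF _ p0, of 1 "(D z)\<^sup>2 / \<tau>\<^sup>2" z] by simp
    qed
    also have "\<dots> \<le> (\<Sum>z\<in>S. pmf P z * (D z)\<^sup>2 / \<tau>\<^sup>2)"
      by (rule sum_mono2[OF finS]) (auto simp: T_def)
    also have "\<dots> = (\<Sum>z\<in>S. pmf P z * (D z)\<^sup>2) / \<tau>\<^sup>2"
      by (simp add: sum_divide_distrib)
    also have "\<dots> \<le> s\<^sup>2 / \<tau>\<^sup>2" using ED tp by (simp add: divide_right_mono)
    also have "\<dots> = \<delta>" unfolding t2 using sp assms(3) by simp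
    finally show ?thesis .
  qed
  finally show ?thesis .
qed

end
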